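(* If $S$ is a T2R semigroup, with $S=S_0\cup S_1$ as in the definition, then there is an element $b\in S_0$ such that $|J_b|=2$.
   Context: A semigroup $S$ is a $\Delta$-semigroup if the lattice of all congruences of $S$ is a chain with respect to inclusion. A semigroup $N$ with zero $0$ is nil if every element has some power equal to $0$; non-trivial means having more than one element. A T2R semigroup is a $\Delta$-semigroup $S$ which is the disjoint union of a non-trivial nil ideal $S_0$ (with zero $0$, which is then the zero of $S$) and a subsemigroup $S_1$ which is a two-element right zero semigroup (i.e. $S_1=\{u,v\}$ with $xy=y$ for $x,y\in S_1$). $S^1$ denotes $S$ with an identity $1$ adjoined. For $a\in S$: $J(a)=S^1aS^1$ and $J_a=\{s\in S:J(s)=J(a)\}$. *)

theory Defs
  imports Main
begin

definition semigroup :: "'a set \<Rightarrow> ('a \<Rightarrow> 'a \<Rightarrow> 'a) \<Rightarrow> bool" where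
  "semigroup S m \<longleftrightarrow> (\<forall>x\<in>S. \<forall>y\<in>S. m x y \<in> S) \<and>
     (\<forall>x\<in>S. \<forall>y\<in>S. \<forall>z\<in>S. m (m x y) z = m x (m y z))"

definition congruence :: "'a set \<Rightarrow> ('a \<Rightarrow> 'a \<Rightarrow> 'a) \<Rightarrow> ('a \<times> 'a) set \<Rightarrow> bool" where
  "congruence S m R \<longleftrightarrow> equiv S R \<and>
     (\<forall>a b c. (a, b) \<in> R \<longrightarrow> c \<in> S \<longrightarrow> (m c a, m c b) \<in> R \<and> (m a c, m b c) \<in> R)"

definition Delta_semigroup :: "'a set \<Rightarrow> ('a \<Rightarrow> 'a \<Rightarrow> 'a) \<Rightarrow> bool" where
  "Delta_semigroup S m \<longleftrightarrow> semigroup S m \<and>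
     (\<forall>R1 R2. congruence S m R1 \<longrightarrow> congruence S m R2 \<longrightarrow> R1 \<subseteq> R2 \<or> R2 \<subseteq> R1)"

text \<open>spow m x n = x^(n+1)\<close>
fun spow :: "('a \<Rightarrow> 'a \<Rightarrow> 'a) \<Rightarrow> 'a \<Rightarrow> nat \<Rightarrow> 'a" where
  "spow m x 0 = x"
| "spow m x (Suc n) = m (spow m x n) x"

definition ideal :: "'a set \<Rightarrow> ('a \<Rightarrow> 'a \<Rightarrow> 'a) \<Rightarrow> 'a set \<Rightarrow> bool" where
  "ideal S m I \<longleftrightarrow> I \<subseteq> S \<and> I \<noteq> {} \<and> (\<forall>s\<in>S. \<forall>a\<in>I. m s a \<in> I \<and> m a s \<in> I)"

definition nontrivial_nil_with_zero :: "'a set \<Rightarrow> ('a \<Rightarrow> 'a \<Rightarrow> 'a) \<Rightarrow> 'a \<Rightarrow> bool" where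
  "nontrivial_nil_with_zero N m z \<longleftrightarrow> z \<in> N \<and>
     (\<forall>x\<in>N. m z x = z \<and> m x z = z) \<and>
     (\<forall>x\<in>N. \<exists>n. spow m x n = z) \<and>
     (\<exists>x\<in>N. x \<noteq> z)"

definition right_zero_2 :: "'a set \<Rightarrow> ('a \<Rightarrow> 'a \<Rightarrow> 'a) \<Rightarrow> bool" where
  "right_zero_2 T m \<longleftrightarrow> card T = 2 \<and> (\<forall>x\<in>T. \<forall>y\<in>T. m x y = y)"

definition T2R :: "'a set \<Rightarrow> ('a \<Rightarrow> 'a \<Rightarrow> 'a) \<Rightarrow> 'a set \<Rightarrow> 'a set \<Rightarrow> bool" where
  "T2R S m S0 S1 \<longleftrightarrow> Delta_semigroup S m \<and> S = S0 \<union> S1 \<and> S0 \<inter> S1 = {} \<and>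
     ideal S m S0 \<and> (\<exists>z. nontrivial_nil_with_zero S0 m z) \<and> right_zero_2 S1 m"

text \<open>J(a) = S^1 a S^1\<close>
definition principal_ideal :: "'a set \<Rightarrow> ('a \<Rightarrow> 'a \<Rightarrow> 'a) \<Rightarrow> 'a \<Rightarrow> 'a set" where
  "principal_ideal S m a = {a} \<union> {m s a |s. s \<in> S} \<union> {m a t |t. t \<in> S} \<union> {m (m s a) t |s t. s \<in> S \<and> t \<in> S}"

definition J_class :: "'a set \<Rightarrow> ('a \<Rightarrow> 'a \<Rightarrow> 'a) \<Rightarrow> 'a \<Rightarrow> 'a set" where
  "J_class S m a = {s \<in> S. principal_ideal S m s = principal_ideal S m a}"

end

theory Submission
  imports Defs
begin

fun lmo :: "('a \<Rightarrow> 'a \<Rightarrow> 'a) \<Rightarrow> 'a option \<Rightarrow> 'a \<Rightarrow> 'a" where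
  "lmo m None x = x" | "lmo m (Some s) x = m s x"
fun rmo :: "('a \<Rightarrow> 'a \<Rightarrow> 'a) \<Rightarrow> 'a \<Rightarrow> 'a option \<Rightarrow> 'a" where
  "rmo m x None = x" | "rmo m x (Some t) = m x t"
fun omul :: "('a \<Rightarrow> 'a \<Rightarrow> 'a) \<Rightarrow> 'a option \<Rightarrow> 'a option \<Rightarrow> 'a option" where
  "omul m None y = y" | "omul m (Some x) None = Some x" | "omul m (Some x) (Some y) = Some (m x y)"

locale T2Rc =
  fixes S S0 :: "'a set" and m :: "'a \<Rightarrow> 'a \<Rightarrow> 'a" and u v z :: 'a
  assumes cl: "x \<in> S \<Longrightarrow> y \<in> S \<Longrightarrow> m x y \<in> S"
  and assoc: "x \<in> S \<Longrightarrow> y \<in> S \<Longrightarrow> w \<in> S \<Longrightarrow> m (m x y) w = m x (m y w)"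
  and chain: "congruence S m R1 \<Longrightarrow> congruence S m R2 \<Longrightarrow> R1 \<subseteq> R2 \<or> R2 \<subseteq> R1"
  and Sdef: "S = S0 \<union> {u,v}" and uv: "u \<noteq> v" and uS0: "u \<notin> S0" and vS0: "v \<notin> S0"
  and uu: "m u u = u" and uvv: "m u v = v" and vuu: "m v u = u" and vv: "m v v = v"
  and idl: "s \<in> S \<Longrightarrow> a \<in> S0 \<Longrightarrow> m s a \<in> S0 \<and> m a s \<in> S0"
  and zS0: "z \<in> S0" and z0: "x \<in> S0 \<Longrightarrow> m z x = z \<and> m x z = z"
  and nil: "x \<in> S0 \<Longrightarrow> \<exists>n. spow m x n = z"
  and ntr: "\<exists>x\<in>S0. x \<noteq> z"
begin

lemma S0S: "x \<in> S0 \<Longrightarrow> x \<in> S" using Sdef by auto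
lemma uS: "u \<in> S" and vS: "v \<in> S" using Sdef by auto

lemma zero: "x \<in> S \<Longrightarrow> m z x = z \<and> m x z = z"
proof -
  assume x: "x \<in> S"
  have zS: "z \<in> S" using zS0 S0S by auto
  have a: "m z x \<in> S0" "m x z \<in> S0" using idl x zS0 by auto
  have "m z x = m (m z z) x" using z0 zS0 by auto
  also have "\<dots> = m z (m z x)" using assoc zS x by auto
  also have "\<dots> = z" using z0 a by auto
  finally have 1: "m z x = z" .
  have "m x z = m x (m z z)" using z0 zS0 by auto
  also have "\<dots> = m (m x z) z" using assoc zS x by auto
  also have "\<dots> = z" using z0 a by auto
  finally show ?thesis using 1 by auto
qed

definition R0 where "R0 = {(x,y). x\<in>S \<and> y\<in>S \<and> (x=y \<or> (x\<in>S0 \<and> y\<in>S0))}"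

lemma congI:
  assumes "R \<subseteq> S \<times> S" "\<And>x. x \<in> S \<Longrightarrow> (x,x) \<in> R"
    "\<And>x y. (x,y) \<in> R \<Longrightarrow> (y,x) \<in> R"
    "\<And>x y w. (x,y) \<in> R \<Longrightarrow> (y,w) \<in> R \<Longrightarrow> (x,w) \<in> R"
    "\<And>a b c. (a,b) \<in> R \<Longrightarrow> c \<in> S \<Longrightarrow> (m c a, m c b) \<in> R \<and> (m a c, m b c) \<in> R"
  shows "congruence S m R"
  unfolding congruence_def equiv_def refl_on_def sym_def trans_def using assms by blast

lemma R0c: "congruence S m R0"
  apply (rule congI)
  unfolding R0_def using cl idl S0S by auto

lemma cmp: "congruence S m R \<Longrightarrow> (u,v) \<in> R \<Longrightarrow> R0 \<subseteq> R"
  using chain[OF R0c, of R] uv uS0 unfolding R0_def by blast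

lemma R0z: "R0 \<subseteq> R \<Longrightarrow> x \<in> S0 \<Longrightarrow> (x,z) \<in> R"
  unfolding R0_def using zS0 S0S by blast

lemma exc: "\<exists>c\<in>S0. m c u \<noteq> m c v"
proof (rule ccontr)
  assume "\<not> ?thesis"
  hence H: "\<And>c. c \<in> S0 \<Longrightarrow> m c u = m c v" by blast
  define \<theta> where "\<theta> = {(x,y). x\<in>S \<and> y\<in>S \<and> (\<forall>s\<in>S0. m s x = m s y)}"
  have "congruence S m \<theta>"
  proof (rule congI)
    fix a b c assume ab: "(a,b) \<in> \<theta>" and c: "c \<in> S"
    have a: "a \<in> S" "b \<in> S" "\<And>s. s \<in> S0 \<Longrightarrow> m s a = m s b" using ab unfolding \<theta>_def by auto
    have "\<And>s. s \<in> S0 \<Longrightarrow> m s (m c a) = m s (m c b)"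
    proof -
      fix s assume s: "s \<in> S0"
      have "m s (m c a) = m (m s c) a" using assoc S0S s c a by auto
      also have "\<dots> = m (m s c) b" using a(3) idl s c by auto
      also have "\<dots> = m s (m c b)" using assoc S0S s c a by auto
      finally show "m s (m c a) = m s (m c b)" .
    qed
    moreover have "\<And>s. s \<in> S0 \<Longrightarrow> m s (m a c) = m s (m b c)"
    proof -
      fix s assume s: "s \<in> S0"
      have "m s (m a c) = m (m s a) c" using assoc[of s a c] S0S s c a by simp
      also have "\<dots> = m (m s b) c" using a(3) s by auto
      also have "\<dots> = m s (m b c)" using assoc[of s b c] S0S s c a by auto
      finally show "m s (m a c) = m s (m b c)" .
    qed
    ultimately show "(m c a, m c b) \<in> \<theta> \<and> (m a c, m b c) \<in> \<theta>"
      unfolding \<theta>_def using cl a c by auto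
  qed (auto simp: \<theta>_def)
  moreover have "(u,v) \<in> \<theta>" unfolding \<theta>_def using H uS vS by auto
  ultimately have "R0 \<subseteq> \<theta>" by (rule cmp)
  hence sq: "\<And>s x. s \<in> S0 \<Longrightarrow> x \<in> S0 \<Longrightarrow> m s x = z"
    using R0z[of \<theta>] z0 unfolding \<theta>_def by fastforce
  define L where "L = (\<lambda>c. m u c) ` S0"
  have LS0: "L \<subseteq> S0" unfolding L_def using idl uS by auto
  define \<gamma> where "\<gamma> = {(x,y). x\<in>S \<and> y\<in>S \<and> (x=y \<or> (x\<in>{u,v} \<and> y\<in>{u,v}) \<or> (x\<in>L \<and> y\<in>L))}"
  have "congruence S m \<gamma>"
  proof (rule congI)
    fix x y w assume "(x,y) \<in> \<gamma>" "(y,w) \<in> \<gamma>"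
    then show "(x,w) \<in> \<gamma>" unfolding \<gamma>_def using LS0 uS0 vS0 by auto
  next
    fix a b c assume ab: "(a,b) \<in> \<gamma>" and c: "c \<in> S"
    have aS: "a \<in> S" "b \<in> S" using ab unfolding \<gamma>_def by auto
    have mS: "m c a \<in> S" "m c b \<in> S" "m a c \<in> S" "m b c \<in> S" using cl aS c by auto
    have Lmem: "\<And>d. d \<in> S0 \<Longrightarrow> m u d \<in> L" unfolding L_def by auto
    have vL: "\<And>d. d \<in> S0 \<Longrightarrow> m v d \<in> L"
    proof -
      fix d assume d: "d \<in> S0"
      have "m v d = m u (m v d)" using assoc uS vS S0S d uvv by metis
      thus "m v d \<in> L" using Lmem idl vS d by metis
    qed
    let ?G = "(m c a = m c b \<or> (m c a\<in>{u,v} \<and> m c b\<in>{u,v}) \<or> (m c a\<in>L \<and> m c b\<in>L)) \<and>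
       (m a c = m b c \<or> (m a c\<in>{u,v} \<and> m b c\<in>{u,v}) \<or> (m a c\<in>L \<and> m b c\<in>L))"
    have D: "a = b \<or> (a\<in>{u,v} \<and> b\<in>{u,v}) \<or> (a\<in>L \<and> b\<in>L)" using ab unfolding \<gamma>_def by auto
    have C: "c \<in> S0 \<or> c = u \<or> c = v" using c Sdef by auto
    have c1: "a = b \<Longrightarrow> ?G" by auto
    have c2: "a\<in>{u,v} \<and> b\<in>{u,v} \<Longrightarrow> c \<in> S0 \<Longrightarrow> ?G"
      using H Lmem vL by auto
    have c3: "a\<in>{u,v} \<and> b\<in>{u,v} \<Longrightarrow> c = u \<or> c = v \<Longrightarrow> ?G"
      using uu uvv vuu vv by auto
    have c4: "a\<in>L \<and> b\<in>L \<Longrightarrow> c \<in> S0 \<Longrightarrow> ?G"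
    proof -
      assume ab: "a\<in>L \<and> b\<in>L" and c0: "c \<in> S0"
      have "m c a = z" "m c b = z" using sq c0 ab LS0 by auto
      moreover have "m a c = z" "m b c = z" using sq c0 ab LS0 by auto
      ultimately show ?G by auto
    qed
    have c5: "a\<in>L \<and> b\<in>L \<Longrightarrow> c = u \<or> c = v \<Longrightarrow> ?G"
    proof -
      assume ab: "a\<in>L \<and> b\<in>L" and cu: "c = u \<or> c = v"
      then obtain a' b' where a': "a' \<in> S0" "a = m u a'" and b': "b' \<in> S0" "b = m u b'"
        unfolding L_def by auto
      have cS: "c \<in> S" using cu uS vS by auto
      have cc: "m c u = u" using cu uu vuu by auto
      have 1: "m c a = a" "m c b = b"
        using a' b' assoc[of c u a'] assoc[of c u b'] uS cS S0S cc by auto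
      have 2: "m a c = m u (m a' c)" "m b c = m u (m b' c)"
        using a' b' assoc[of u a' c] assoc[of u b' c] uS cS S0S by auto
      have "m a' c \<in> S0" "m b' c \<in> S0" using idl a' b' c by auto
      thus ?G using 1 2 ab Lmem by auto
    qed
    have ?G using D C c1 c2 c3 c4 c5 by blast
    thus "(m c a, m c b) \<in> \<gamma> \<and> (m a c, m b c) \<in> \<gamma>" unfolding \<gamma>_def using mS by auto
  qed (auto simp: \<gamma>_def)
  moreover have "(u,v) \<in> \<gamma>" unfolding \<gamma>_def using uS vS by auto
  ultimately have "R0 \<subseteq> \<gamma>" by (rule cmp)
  hence inL: "\<And>x. x \<in> S0 \<Longrightarrow> x \<noteq> z \<Longrightarrow> x \<in> L"
    using R0z[of \<gamma>] LS0 uS0 vS0 zS0 unfolding \<gamma>_def by blast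
  define \<delta> where "\<delta> = {(x,y). x\<in>S \<and> y\<in>S \<and> (x=y \<or> (x\<in>{u,v} \<and> y\<in>{u,v}))}"
  have uvc: "\<And>c. c \<in> S0 \<Longrightarrow> m u c = m v c"
  proof -
    fix c assume c: "c \<in> S0"
    show "m u c = m v c"
    proof (cases "c = z")
      case True thus ?thesis using zero uS vS by metis
    next
      case False
      then obtain d where d: "d \<in> S0" "c = m u d" using inL c unfolding L_def by auto
      thus ?thesis using assoc uS vS S0S uu vuu by metis
    qed
  qed
  have "congruence S m \<delta>"
  proof (rule congI)
    fix a b c assume ab: "(a,b) \<in> \<delta>" and c: "c \<in> S"
    have aS: "a \<in> S" "b \<in> S" using ab unfolding \<delta>_def by auto
    have mS: "m c a \<in> S" "m c b \<in> S" "m a c \<in> S" "m b c \<in> S" using cl aS c by auto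
    have "a = b \<or> (a\<in>{u,v} \<and> b\<in>{u,v})" using ab unfolding \<delta>_def by auto
    moreover have "c \<in> S0 \<or> c = u \<or> c = v" using c Sdef by auto
    ultimately have "(m c a = m c b \<or> (m c a\<in>{u,v} \<and> m c b\<in>{u,v})) \<and>
       (m a c = m b c \<or> (m a c\<in>{u,v} \<and> m b c\<in>{u,v}))"
      using H uvc uu uvv vuu vv by auto
    thus "(m c a, m c b) \<in> \<delta> \<and> (m a c, m b c) \<in> \<delta>" unfolding \<delta>_def using mS by auto
  qed (auto simp: \<delta>_def)
  moreover have "(u,v) \<in> \<delta>" unfolding \<delta>_def using uS vS by auto
  ultimately have "R0 \<subseteq> \<delta>" by (rule cmp)
  thus False using R0z[of \<delta>] ntr uS0 vS0 zS0 unfolding \<delta>_def by blast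
qed



lemma lmoS: "set_option s \<subseteq> S \<Longrightarrow> x \<in> S \<Longrightarrow> lmo m s x \<in> S"
  by (cases s) (auto intro: cl)
lemma rmoS: "set_option s \<subseteq> S \<Longrightarrow> x \<in> S \<Longrightarrow> rmo m x s \<in> S"
  by (cases s) (auto intro: cl)
lemma omulS: "set_option s \<subseteq> S \<Longrightarrow> set_option t \<subseteq> S \<Longrightarrow> set_option (omul m s t) \<subseteq> S"
  by (cases s; cases t) (auto intro: cl)
lemma lr: "set_option s \<subseteq> S \<Longrightarrow> set_option t \<subseteq> S \<Longrightarrow> x \<in> S \<Longrightarrow>
   lmo m s (rmo m x t) = rmo m (lmo m s x) t"
  by (cases s; cases t) (auto simp: assoc)
lemma ll: "set_option s \<subseteq> S \<Longrightarrow> set_option t \<subseteq> S \<Longrightarrow> x \<in> S \<Longrightarrow>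
   lmo m s (lmo m t x) = lmo m (omul m s t) x"
  by (cases s; cases t) (auto simp: assoc)
lemma rr: "set_option s \<subseteq> S \<Longrightarrow> set_option t \<subseteq> S \<Longrightarrow> x \<in> S \<Longrightarrow>
   rmo m (rmo m x s) t = rmo m x (omul m s t)"
  by (cases s; cases t) (auto simp: assoc)

lemma PI: "x \<in> principal_ideal S m a \<longleftrightarrow>
   (\<exists>s t. set_option s \<subseteq> S \<and> set_option t \<subseteq> S \<and> x = rmo m (lmo m s a) t)"
proof
  assume "x \<in> principal_ideal S m a"
  thus "\<exists>s t. set_option s \<subseteq> S \<and> set_option t \<subseteq> S \<and> x = rmo m (lmo m s a) t"
    unfolding principal_ideal_def
  proof (elim UnE)
    assume "x \<in> {a}"
    hence "x = rmo m (lmo m None a) None" by simp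
    thus ?thesis by (metis option.set(1) empty_subsetI)
  next
    assume "x \<in> {m s a |s. s \<in> S}"
    then obtain s where "s \<in> S" "x = rmo m (lmo m (Some s) a) None" by auto
    thus ?thesis by (metis option.set(1) option.set(2) empty_subsetI insert_subset)
  next
    assume "x \<in> {m a t |t. t \<in> S}"
    then obtain t where "t \<in> S" "x = rmo m (lmo m None a) (Some t)" by auto
    thus ?thesis by (metis option.set(1) option.set(2) empty_subsetI insert_subset)
  next
    assume "x \<in> {m (m s a) t |s t. s \<in> S \<and> t \<in> S}"
    then obtain s t where "s \<in> S" "t \<in> S" "x = rmo m (lmo m (Some s) a) (Some t)" by auto
    thus ?thesis by (metis option.set(2) empty_subsetI insert_subset)
  qed
next
  assume "\<exists>s t. set_option s \<subseteq> S \<and> set_option t \<subseteq> S \<and> x = rmo m (lmo m s a) t"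
  then obtain s t where "set_option s \<subseteq> S" "set_option t \<subseteq> S" "x = rmo m (lmo m s a) t" by blast
  thus "x \<in> principal_ideal S m a" unfolding principal_ideal_def
    by (cases s; cases t) auto
qed

lemma PI_trans:
  assumes a: "a \<in> S" and y: "y \<in> principal_ideal S m a"
  shows "principal_ideal S m y \<subseteq> principal_ideal S m a"
proof
  fix x assume "x \<in> principal_ideal S m y"
  then obtain s t where st: "set_option s \<subseteq> S" "set_option t \<subseteq> S" "x = rmo m (lmo m s y) t"
    using PI by blast
  obtain s' t' where st': "set_option s' \<subseteq> S" "set_option t' \<subseteq> S" "y = rmo m (lmo m s' a) t'"
    using PI y by blast
  have "x = rmo m (rmo m (lmo m s (lmo m s' a)) t') t"
    using st st' lr lmoS a by simp
  also have "\<dots> = rmo m (rmo m (lmo m (omul m s s') a) t') t"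
    using st st' ll[of s s' a] a by simp
  also have "\<dots> = rmo m (lmo m (omul m s s') a) (omul m t' t)"
    using st st' rr[of t' t "lmo m (omul m s s') a"] lmoS omulS a by simp
  finally show "x \<in> principal_ideal S m a" using PI omulS st st' by blast
qed

lemma spowS0: "p \<in> S0 \<Longrightarrow> spow m p n \<in> S0"
proof (induction n)
  case (Suc n) thus ?case using idl[of p "spow m p n"] S0S by simp
qed simp

lemma nilL:
  assumes p: "p \<in> S0" and b: "b \<in> S" and Q: "set_option Q \<subseteq> S" and e: "b = rmo m (m p b) Q"
  shows "b = z"
proof -
  have "\<forall>n. \<exists>Qn. set_option Qn \<subseteq> S \<and> b = rmo m (m (spow m p n) b) Qn"
  proof
    fix n show "\<exists>Qn. set_option Qn \<subseteq> S \<and> b = rmo m (m (spow m p n) b) Qn"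
    proof (induction n)
      case 0 thus ?case using Q e by auto
    next
      case (Suc n)
      then obtain Qn where Qn: "set_option Qn \<subseteq> S" "b = rmo m (m (spow m p n) b) Qn" by blast
      have sp: "spow m p n \<in> S" using spowS0 p S0S by auto
      have pS: "p \<in> S" using p S0S by auto
      have "b = rmo m (m (spow m p n) (rmo m (m p b) Q)) Qn"
        using Qn(2) by (simp only: e[symmetric])
      also have "\<dots> = rmo m (rmo m (m (spow m p n) (m p b)) Q) Qn"
        using lr[of "Some (spow m p n)" Q "m p b"] sp Q cl pS b by simp
      also have "\<dots> = rmo m (rmo m (m (spow m p (Suc n)) b) Q) Qn"
        using assoc[of "spow m p n" p b] sp pS b by simp
      also have "\<dots> = rmo m (m (spow m p (Suc n)) b) (omul m Q Qn)"
        using rr[of Q Qn "m (spow m p (Suc n)) b"] Q Qn cl pS b sp by simp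
      finally show ?case using omulS Q Qn by blast
    qed
  qed
  moreover obtain n where "spow m p n = z" using nil p by blast
  ultimately obtain Qn where "set_option Qn \<subseteq> S" "b = rmo m (m z b) Qn" by metis
  thus "b = z" using zero b by (cases Qn) auto
qed

lemma lmo_m: "set_option P \<subseteq> S \<Longrightarrow> x \<in> S \<Longrightarrow> q \<in> S \<Longrightarrow> m (lmo m P x) q = lmo m P (m x q)"
  by (cases P) (auto simp: assoc)

lemma nilR:
  assumes q: "q \<in> S0" and b: "b \<in> S" and P: "set_option P \<subseteq> S" and e: "b = lmo m P (m b q)"
  shows "b = z"
proof -
  have qS: "q \<in> S" using q S0S by auto
  have "\<forall>n. \<exists>Pn. set_option Pn \<subseteq> S \<and> b = lmo m Pn (m b (spow m q n))"
  proof
    fix n show "\<exists>Pn. set_option Pn \<subseteq> S \<and> b = lmo m Pn (m b (spow m q n))"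
    proof (induction n)
      case 0 thus ?case using P e by auto
    next
      case (Suc n)
      then obtain Pn where Pn: "set_option Pn \<subseteq> S" "b = lmo m Pn (m b (spow m q n))" by blast
      have sp: "spow m q n \<in> S" using spowS0 q S0S by auto
      have "b = lmo m P (m (lmo m Pn (m b (spow m q n))) q)"
        using e by (simp only: Pn(2)[symmetric])
      also have "\<dots> = lmo m P (lmo m Pn (m (m b (spow m q n)) q))"
        using lmo_m[of Pn "m b (spow m q n)" q] Pn cl b sp qS by simp
      also have "\<dots> = lmo m P (lmo m Pn (m b (spow m q (Suc n))))"
        using assoc[of b "spow m q n" q] b sp qS by simp
      also have "\<dots> = lmo m (omul m P Pn) (m b (spow m q (Suc n)))"
        using ll[of P Pn "m b (spow m q (Suc n))"] P Pn cl b sp qS by simp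
      finally show ?case using omulS P Pn by blast
    qed
  qed
  moreover obtain n where "spow m q n = z" using nil q by blast
  ultimately obtain Pn where "set_option Pn \<subseteq> S" "b = lmo m Pn (m b z)" by metis
  thus "b = z" using zero b by (cases Pn) auto
qed

lemma Jsub:
  assumes b: "b \<in> S0" "b \<noteq> z" and y: "y \<in> J_class S m b"
  shows "y = b \<or> y = m b u \<or> y = m b v"
proof -
  have bS: "b \<in> S" using b S0S by auto
  have yS: "y \<in> S" and eq: "principal_ideal S m y = principal_ideal S m b"
    using y unfolding J_class_def by auto
  have "y \<in> principal_ideal S m y" using PI[of y y] by (metis lmo.simps(1) rmo.simps(1) empty_subsetI option.set(1))
  hence "y \<in> principal_ideal S m b" using eq by simp
  then obtain s t where st: "set_option s \<subseteq> S" "set_option t \<subseteq> S" and yd: "y = rmo m (lmo m s b) t"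
    using PI by blast
  have "b \<in> principal_ideal S m b" using PI[of b b] by (metis lmo.simps(1) rmo.simps(1) empty_subsetI option.set(1))
  hence "b \<in> principal_ideal S m y" using eq by simp
  then obtain s' t' where st': "set_option s' \<subseteq> S" "set_option t' \<subseteq> S" and bd: "b = rmo m (lmo m s' y) t'"
    using PI by blast
  define P where "P = omul m s' s"
  define Q where "Q = omul m t t'"
  have PS: "set_option P \<subseteq> S" and QS: "set_option Q \<subseteq> S" using omulS st st' P_def Q_def by auto
  have lsb: "lmo m s b \<in> S" using lmoS st bS by auto
  have lPb: "lmo m P b \<in> S" using lmoS PS bS by auto
  have be: "b = rmo m (lmo m P b) Q"
  proof -
    have "b = rmo m (lmo m s' (rmo m (lmo m s b) t)) t'"
      using bd[unfolded yd] .
    also have "\<dots> = rmo m (rmo m (lmo m s' (lmo m s b)) t) t'"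
      using lr[of s' t "lmo m s b"] st st' lsb by simp
    also have "\<dots> = rmo m (rmo m (lmo m P b) t) t'"
      using ll[of s' s b] st st' bS unfolding P_def by simp
    also have "\<dots> = rmo m (lmo m P b) Q"
      using rr[of t t' "lmo m P b"] st st' lPb unfolding Q_def by simp
    finally show ?thesis .
  qed
  have Pn: "\<And>p. P = Some p \<Longrightarrow> p \<notin> S0"
  proof
    fix p assume P: "P = Some p" "p \<in> S0"
    have be': "b = rmo m (m p b) Q" using be[unfolded P(1) lmo.simps] .
    show False using nilL[OF P(2) bS QS be'] b by simp
  qed
  have Qn: "\<And>q. Q = Some q \<Longrightarrow> q \<notin> S0"
  proof
    fix q assume Q: "Q = Some q" "q \<in> S0"
    have qS: "q \<in> S" using Q S0S by auto
    have be': "b = lmo m P (m b q)"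
      using trans[OF be[unfolded Q(1) rmo.simps] lmo_m[OF PS bS qS]] .
    show False using nilR[OF Q(2) bS PS be'] b by simp
  qed
  have tc: "t = None \<or> t = Some u \<or> t = Some v"
  proof (cases t)
    case (Some w)
    have "w \<notin> S0"
    proof
      assume w: "w \<in> S0"
      obtain q where "Q = Some q" "q \<in> S0"
        using Some w idl st'(2) unfolding Q_def by (cases t') auto
      thus False using Qn by auto
    qed
    thus ?thesis using Some st(2) Sdef by auto
  qed auto
  have rb: "\<And>w. rmo m w t = w \<or> rmo m w t = m w u \<or> rmo m w t = m w v"
    using tc by auto
  show ?thesis
  proof (cases s)
    case None thus ?thesis using yd rb[of b] by simp
  next
    case (Some w)
    have wS: "w \<in> S" using st(1) Some by auto
    have "w \<notin> S0"
    proof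
      assume w: "w \<in> S0"
      obtain p where "P = Some p" "p \<in> S0"
        using Some w idl st'(1) S0S unfolding P_def by (cases s') auto
      thus False using Pn by auto
    qed
    hence wuv: "w = u \<or> w = v" using wS Sdef by auto
    obtain p where p: "P = Some p" using Some unfolding P_def by (cases s') auto
    have pS: "p \<in> S" using p PS by auto
    hence puv: "p = u \<or> p = v" using Pn p Sdef by auto
    have wp: "m w p = p" using wuv puv uu uvv vuu vv by auto
    have be': "b = rmo m (m p b) Q" using be[unfolded p lmo.simps] .
    have "m w b = m w (rmo m (m p b) Q)" using arg_cong[OF be', of "m w"] .
    also have "\<dots> = rmo m (m w (m p b)) Q" using lr[of "Some w" Q "m p b"] wS QS cl pS bS by simp
    also have "\<dots> = rmo m (m p b) Q" using assoc[of w p b] wS pS bS wp by simp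
    also have "\<dots> = b" using be'[symmetric] .
    finally have wb: "m w b = b" .
    show ?thesis using yd Some wb rb[of b] by simp
  qed
qed

lemma main: "\<exists>b\<in>S0. card (J_class S m b) = 2"
proof -
  obtain c where c: "c \<in> S0" "m c u \<noteq> m c v" using exc by blast
  have cS: "c \<in> S" using c S0S by auto
  have cuS: "m c u \<in> S0" "m c v \<in> S0" using idl uS vS c by auto
  have cuu: "m (m c u) u = m c u" using assoc[of c u u] cS uS uu by simp
  have cuv: "m (m c u) v = m c v" using assoc[of c u v] cS uS vS uvv by simp
  have cvu: "m (m c v) u = m c u" using assoc[of c v u] cS uS vS vuu by simp
  have cvv: "m (m c v) v = m c v" using assoc[of c v v] cS vS vv by simp
  define b where "b = (if m c u \<noteq> z then m c u else m c v)"
  have bS0: "b \<in> S0" and bz: "b \<noteq> z" using cuS c unfolding b_def by auto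
  have bu: "m b u = m c u" and bv: "m b v = m c v"
    unfolding b_def using cuu cuv cvu cvv by auto
  have p1: "m c u \<in> principal_ideal S m (m c v)"
  proof -
    have "set_option (None::'a option) \<subseteq> S \<and> set_option (Some u) \<subseteq> S \<and>
       m c u = rmo m (lmo m None (m c v)) (Some u)" using cvu uS by simp
    thus ?thesis unfolding PI by blast
  qed
  have p2: "m c v \<in> principal_ideal S m (m c u)"
  proof -
    have "set_option (None::'a option) \<subseteq> S \<and> set_option (Some v) \<subseteq> S \<and>
       m c v = rmo m (lmo m None (m c u)) (Some v)" using cuv vS by simp
    thus ?thesis unfolding PI by blast
  qed
  have cuS': "m c u \<in> S" "m c v \<in> S" using cuS S0S by auto
  have eqp: "principal_ideal S m (m c u) = principal_ideal S m (m c v)"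
    using PI_trans[OF cuS'(1) p2] PI_trans[OF cuS'(2) p1] by blast
  have "J_class S m b = {m c u, m c v}"
  proof
    show "J_class S m b \<subseteq> {m c u, m c v}"
    proof
      fix y assume "y \<in> J_class S m b"
      hence "y = b \<or> y = m b u \<or> y = m b v" using Jsub[OF bS0 bz] by blast
      moreover have "b = m c u \<or> b = m c v" unfolding b_def by auto
      ultimately show "y \<in> {m c u, m c v}" using bu bv by auto
    qed
    have "principal_ideal S m b = principal_ideal S m (m c u)" unfolding b_def using eqp by auto
    thus "{m c u, m c v} \<subseteq> J_class S m b"
      unfolding J_class_def using eqp cuS' by auto
  qed
  hence "card (J_class S m b) = 2" using c(2) by simp
  thus ?thesis using bS0 by blast
qed

end

theorem proposition4:
  fixes S S0 S1 :: "'a set" and m :: "'a \<Rightarrow> 'a \<Rightarrow> 'a"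
  assumes "T2R S m S0 S1"
  shows "\<exists>b\<in>S0. card (J_class S m b) = 2"
proof -
  have D: "Delta_semigroup S m" and Sd: "S = S0 \<union> S1" and dj: "S0 \<inter> S1 = {}"
    and I: "ideal S m S0" and N: "\<exists>z. nontrivial_nil_with_zero S0 m z" and R: "right_zero_2 S1 m"
    using assms unfolding T2R_def by auto
  obtain z where z: "nontrivial_nil_with_zero S0 m z" using N by blast
  obtain u v where uv: "u \<noteq> v" "S1 = {u,v}" using R unfolding right_zero_2_def card_2_iff by blast
  have rz: "\<And>x y. x \<in> S1 \<Longrightarrow> y \<in> S1 \<Longrightarrow> m x y = y" using R unfolding right_zero_2_def by blast
  interpret T2Rc S S0 m u v z
  proof
    show "\<And>x y. x \<in> S \<Longrightarrow> y \<in> S \<Longrightarrow> m x y \<in> S"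
      using D unfolding Delta_semigroup_def semigroup_def by blast
    show "\<And>x y w. x \<in> S \<Longrightarrow> y \<in> S \<Longrightarrow> w \<in> S \<Longrightarrow> m (m x y) w = m x (m y w)"
      using D unfolding Delta_semigroup_def semigroup_def by blast
    show "\<And>R1 R2. congruence S m R1 \<Longrightarrow> congruence S m R2 \<Longrightarrow> R1 \<subseteq> R2 \<or> R2 \<subseteq> R1"
      using D unfolding Delta_semigroup_def by blast
    show "S = S0 \<union> {u, v}" using Sd uv by simp
    show "u \<noteq> v" by (rule uv(1))
    show "u \<notin> S0" "v \<notin> S0" using dj uv by auto
    show "m u u = u" "m u v = v" "m v u = u" "m v v = v" using rz uv by auto
    show "\<And>s a. s \<in> S \<Longrightarrow> a \<in> S0 \<Longrightarrow> m s a \<in> S0 \<and> m a s \<in> S0"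
      using I unfolding ideal_def by blast
    show "z \<in> S0" "\<And>x. x \<in> S0 \<Longrightarrow> m z x = z \<and> m x z = z"
      "\<And>x. x \<in> S0 \<Longrightarrow> \<exists>n. spow m x n = z" "\<exists>x\<in>S0. x \<noteq> z"
      using z unfolding nontrivial_nil_with_zero_def by auto
  qed
  show ?thesis by (rule main)
qed

end
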